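(* Consider the system $x_{t+1}=Ax_t+Bu_t+v_t$ with i.i.d. disturbances from a distribution $\mathcal{D}$ on $\mathbb{R}^n$, positive definite $Q,R$, $\gamma\in(0,1)$ and a feedback gain $K$ with $A_K=A+BK$. Let $P$ solve $P=Q+K^{\rm T}RK+\gamma A_K^{\rm T}PA_K$ and for $x\in\mathbb{R}^n$ let $$G^{K}(x)=x^{\rm T}Px+2\sum_{k=0}^{\infty}\gamma^{k+1}w_k^{\rm T}PA_K^{k+1}x+\sum_{k=0}^{\infty}\gamma^{k+1}w_k^{\rm T}Pw_k+2\sum_{k=1}^{\infty}\gamma^{k+1}w_k^{\rm T}P\sum_{\tau=0}^{k-1}A_K^{k-\tau}w_\tau,$$ with $w_k\sim\mathcal{D}$ mutually independent. Assume $\mathbb{E}[w_k]=0$ and $\mathbb{E}[\|w_k\|^4]\le\sigma_4^4$ for all $k\in\mathbb{N}$, and that $K$ is stabilizing with $\|A_K\|=\rho_K<1$ (spectral norm). Then the variance of $G^K(x)$ is bounded (finite).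
   Context: $\|\cdot\|$ denotes the Euclidean norm for vectors and the spectral norm for matrices. *)

theory Defs
  imports "HOL-Analysis.Analysis" "HOL-Probability.Probability"
begin

primrec matpow :: "real^'n^'n \<Rightarrow> nat \<Rightarrow> real^'n^'n" where
  "matpow A 0 = mat 1"
| "matpow A (Suc k) = A ** matpow A k"

definition pos_def_mat :: "real^'n^'n \<Rightarrow> bool" where
  "pos_def_mat M \<longleftrightarrow> transpose M = M \<and> (\<forall>x. x \<noteq> 0 \<longrightarrow> x \<bullet> (M *v x) > 0)"

definition spec_norm :: "real^'n^'m \<Rightarrow> real" where
  "spec_norm M = onorm (\<lambda>x. M *v x)"

definition GK :: "real^'n^'n \<Rightarrow> real^'n^'n \<Rightarrow> real \<Rightarrow> (nat \<Rightarrow> real^'n) \<Rightarrow> real^'n \<Rightarrow> real" where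
  "GK P AK \<gamma> w x =
     x \<bullet> (P *v x)
   + 2 * (\<Sum>k. \<gamma>^(k+1) * (w k \<bullet> (P *v (matpow AK (k+1) *v x))))
   + (\<Sum>k. \<gamma>^(k+1) * (w k \<bullet> (P *v w k)))
   + 2 * (\<Sum>j. (\<lambda>k. \<gamma>^(k+1) * (w k \<bullet> (P *v (\<Sum>\<tau><k. matpow AK (k-\<tau>) *v w \<tau>)))) (j+1))"

end

theory Submission
  imports Defs
begin


lemma summable_Suc_pow: "0 \<le> (x::real) \<Longrightarrow> x < 1 \<Longrightarrow> summable (\<lambda>n. real (Suc n) * x^n)"
proof -
  assume x: "0 \<le> x" "x < 1"
  have "summable (\<lambda>n. diffs (\<lambda>_. 1::real) n * x^n)"
    by (rule termdiff_converges[of x 1]) (use x in auto)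
  then show ?thesis by (simp add: diffs_def)
qed

lemma mv_meas[measurable (raw)]:
  "f \<in> borel_measurable M \<Longrightarrow> (\<lambda>x. (P::real^'n^'m) *v f x) \<in> borel_measurable M"
  by (rule borel_measurable_continuous_on[OF linear_continuous_on])
     (simp_all add: linear_conv_bounded_linear[symmetric] matrix_vector_mul_linear)

lemma gk_meas:
  fixes w :: "nat \<Rightarrow> 's \<Rightarrow> real^'n"
  assumes "\<And>k. w k \<in> borel_measurable M"
  shows "(\<lambda>\<omega>. (GK P L g (\<lambda>k. w k \<omega>) x)\<^sup>2) \<in> borel_measurable M"
  unfolding GK_def using assms by measurable

lemma matpow_bound:
  fixes L :: "real^'n^'n"
  assumes "spec_norm L \<le> 1"
  shows "norm (matpow L j *v v) \<le> norm v"
proof (induction j)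
  case 0 then show ?case by simp
next
  case (Suc j)
  have bl: "bounded_linear (\<lambda>x. L *v x)"
    by (simp add: linear_conv_bounded_linear[symmetric] matrix_vector_mul_linear)
  have "norm (matpow L (Suc j) *v v) = norm (L *v (matpow L j *v v))"
    by (simp add: matrix_vector_mul_assoc)
  also have "\<dots> \<le> spec_norm L * norm (matpow L j *v v)"
    unfolding spec_norm_def by (rule onorm[OF bl])
  also have "\<dots> \<le> 1 * norm (matpow L j *v v)"
    by (rule mult_right_mono[OF assms]) simp
  finally show ?case using Suc by simp
qed

lemma P_bound:
  fixes P :: "real^'n^'n"
  shows "\<bar>a \<bullet> (P *v b)\<bar> \<le> spec_norm P * norm a * norm b"
proof -
  have bl: "bounded_linear (\<lambda>x. P *v x)"
    by (simp add: linear_conv_bounded_linear[symmetric] matrix_vector_mul_linear)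
  have "\<bar>a \<bullet> (P *v b)\<bar> \<le> norm a * norm (P *v b)" by (rule Cauchy_Schwarz_ineq2)
  also have "\<dots> \<le> norm a * (spec_norm P * norm b)"
    unfolding spec_norm_def by (intro mult_left_mono onorm[OF bl]) simp
  finally show ?thesis by (simp add: mult_ac)
qed

lemma spec_norm_nonneg: "0 \<le> spec_norm (P::real^'n^'m)"
  unfolding spec_norm_def
  by (rule onorm_pos_le) (simp add: linear_conv_bounded_linear[symmetric] matrix_vector_mul_linear)



lemma det_bound:
  fixes P L :: "real^'n^'n" and u :: "nat \<Rightarrow> real^'n" and x :: "real^'n"
  assumes Pb: "\<And>a b. \<bar>a \<bullet> (P *v b)\<bar> \<le> c * norm a * norm b"
    and Lb: "\<And>j v. norm (matpow L j *v v) \<le> norm v"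
    and c: "0 \<le> c" and g: "0 < \<gamma>" "\<gamma> < 1"
    and d: "d = (1+\<gamma>)/2"
    and sV: "summable (\<lambda>k. (d^k)^2 * norm (u k)^4)"
  defines "\<eta> \<equiv> \<gamma> / d" and "t \<equiv> sqrt (\<Sum>k. (d^k)^2 * norm (u k)^4)"
  shows "summable (\<lambda>k. \<gamma>^(k+1) * (u k \<bullet> (P *v (matpow L (k+1) *v x))))
   \<and> summable (\<lambda>k. \<gamma>^(k+1) * (u k \<bullet> (P *v u k)))
   \<and> summable (\<lambda>j. \<gamma>^(j+1+1) * (u (j+1) \<bullet> (P *v (\<Sum>\<tau><j+1. matpow L (j+1-\<tau>) *v u \<tau>))))
   \<and> \<bar>GK P L \<gamma> u x\<bar> \<le> (\<bar>x \<bullet> (P *v x)\<bar> + 2*(c*norm x*(\<Sum>k. \<gamma>^(k+1))))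
        + t * (2*(c*norm x*(\<Sum>k. \<eta>^k)) + c*(\<Sum>k. \<eta>^k) + 2*(c*(\<Sum>j. real (Suc j) * \<eta>^j)))"
proof -
  have d0: "0 < d" "d < 1" "\<gamma> < d" using d g by auto
  have e: "0 < \<eta>" "\<eta> < 1" using d0 g by (auto simp: \<eta>_def field_simps)
  have t0: "0 \<le> t" unfolding t_def
    by (rule real_sqrt_ge_zero, rule suminf_nonneg[OF sV]) simp
  have F: "norm (u k)^2 * d^k \<le> t" for k
  proof -
    have "sum (\<lambda>k. (d^k)^2 * norm (u k)^4) {k} \<le> (\<Sum>k. (d^k)^2 * norm (u k)^4)"
      by (rule sum_le_suminf[OF sV]) auto
    then have "(norm (u k)^2 * d^k)^2 \<le> (\<Sum>k. (d^k)^2 * norm (u k)^4)"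
      by (simp add: power_mult_distrib power2_eq_square mult_ac numeral_eq_Suc)
    then show ?thesis unfolding t_def by (rule real_le_rsqrt)
  qed
  have F1: "norm (u k)^2 \<le> t / d^k" for k
    using F[of k] d0 by (simp add: field_simps)
  have F2: "\<gamma>^k * norm (u k)^2 \<le> \<eta>^k * t" for k
  proof -
    have "\<gamma>^k = \<eta>^k * d^k" using d0 by (simp add: \<eta>_def power_divide)
    then have "\<gamma>^k * norm (u k)^2 = \<eta>^k * (norm (u k)^2 * d^k)" by simp
    also have "\<dots> \<le> \<eta>^k * t" using F[of k] e by (intro mult_left_mono) auto
    finally show ?thesis .
  qed
  have F3: "norm (u k) * norm (u \<tau>) \<le> t / d^k" if "\<tau> < k" for k \<tau>
  proof -
    have "d^k \<le> d^\<tau>" using d0 that by (intro power_decreasing) auto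
    then have "t / d^\<tau> \<le> t / d^k" using t0 d0 by (intro divide_left_mono) auto
    then have a: "norm (u \<tau>)^2 \<le> t / d^k" using F1[of \<tau>] by linarith
    have "norm (u k) * norm (u \<tau>) \<le> (norm (u k)^2 + norm (u \<tau>)^2) / 2"
    proof -
      have "0 \<le> (norm (u k) - norm (u \<tau>))^2" by simp
      then show ?thesis by (simp add: power2_eq_square algebra_simps)
    qed
    also have "\<dots> \<le> (t / d^k + t / d^k) / 2"
      using a F1[of k] by (intro divide_right_mono add_mono) auto
    finally show ?thesis by simp
  qed
  define f1 where "f1 k = \<gamma>^(k+1) * (u k \<bullet> (P *v (matpow L (k+1) *v x)))" for k
  define f2 where "f2 k = \<gamma>^(k+1) * (u k \<bullet> (P *v u k))" for k
  define f3 where "f3 k = \<gamma>^(k+1) * (u k \<bullet> (P *v (\<Sum>\<tau><k. matpow L (k-\<tau>) *v u \<tau>)))" for k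
  have B1: "norm (f1 k) \<le> c*norm x*(\<gamma>^(k+1) + \<eta>^k * t)" for k
  proof -
    have "norm (f1 k) = \<gamma>^(k+1) * \<bar>u k \<bullet> (P *v (matpow L (k+1) *v x))\<bar>"
      using g by (simp add: f1_def abs_mult)
    also have "\<dots> \<le> \<gamma>^(k+1) * (c * norm (u k) * norm x)"
    proof (rule mult_left_mono)
      have "c * norm (u k) * norm (matpow L (k+1) *v x) \<le> c * norm (u k) * norm x"
        using c Lb[of "k+1" x] by (intro mult_left_mono) auto
      then show "\<bar>u k \<bullet> (P *v (matpow L (k+1) *v x))\<bar> \<le> c * norm (u k) * norm x"
        using Pb[of "u k" "matpow L (k+1) *v x"] by linarith
    qed (use g in simp)
    also have "\<dots> = c * norm x * (\<gamma>^(k+1) * norm (u k))" by simp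
    also have "\<dots> \<le> c * norm x * (\<gamma>^(k+1) + \<eta>^k * t)"
    proof (intro mult_left_mono)
      have "0 \<le> (norm (u k) - 1/2)^2" by simp
      then have "norm (u k) \<le> 1 + norm (u k)^2" by (simp add: power2_eq_square algebra_simps)
      then have "\<gamma>^(k+1) * norm (u k) \<le> \<gamma>^(k+1) * (1 + norm (u k)^2)"
        using g by (intro mult_left_mono) auto
      also have "\<dots> = \<gamma>^(k+1) + \<gamma> * (\<gamma>^k * norm (u k)^2)" by (simp add: algebra_simps)
      also have "\<dots> \<le> \<gamma>^(k+1) + \<gamma>^k * norm (u k)^2"
        using g by (intro add_left_mono mult_left_le_one_le) auto
      finally show "\<gamma>^(k+1) * norm (u k) \<le> \<gamma>^(k+1) + \<eta>^k * t" using F2[of k] by linarith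
    qed (use c in auto)
    finally show ?thesis .
  qed
  have B2: "norm (f2 k) \<le> c * (\<eta>^k * t)" for k
  proof -
    have "norm (f2 k) = \<gamma>^(k+1) * \<bar>u k \<bullet> (P *v u k)\<bar>"
      using g by (simp add: f2_def abs_mult)
    also have "\<dots> \<le> \<gamma>^(k+1) * (c * norm (u k) * norm (u k))"
      using Pb[of "u k" "u k"] g by (intro mult_left_mono) auto
    also have "\<dots> = c * (\<gamma> * (\<gamma>^k * norm (u k)^2))" by (simp add: power2_eq_square mult_ac)
    also have "\<dots> \<le> c * (\<gamma>^k * norm (u k)^2)"
      using g c by (intro mult_left_mono mult_left_le_one_le) auto
    also have "\<dots> \<le> c * (\<eta>^k * t)" using F2[of k] c by (intro mult_left_mono) auto
    finally show ?thesis .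
  qed
  have B3: "norm (f3 k) \<le> c * t * (real k * \<eta>^k)" for k
  proof -
    have ns: "norm (\<Sum>\<tau><k. matpow L (k-\<tau>) *v u \<tau>) \<le> (\<Sum>\<tau><k. norm (u \<tau>))"
      by (rule order_trans[OF norm_sum sum_mono]) (rule Lb)
    have "norm (f3 k) = \<gamma>^(k+1) * \<bar>u k \<bullet> (P *v (\<Sum>\<tau><k. matpow L (k-\<tau>) *v u \<tau>))\<bar>"
      using g by (simp add: f3_def abs_mult)
    also have "\<dots> \<le> \<gamma>^(k+1) * (c * norm (u k) * (\<Sum>\<tau><k. norm (u \<tau>)))"
    proof (rule mult_left_mono)
      have "c * norm (u k) * norm (\<Sum>\<tau><k. matpow L (k-\<tau>) *v u \<tau>) \<le> c * norm (u k) * (\<Sum>\<tau><k. norm (u \<tau>))"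
        using c ns by (intro mult_left_mono) auto
      then show "\<bar>u k \<bullet> (P *v (\<Sum>\<tau><k. matpow L (k-\<tau>) *v u \<tau>))\<bar> \<le> c * norm (u k) * (\<Sum>\<tau><k. norm (u \<tau>))"
        using Pb[of "u k" "\<Sum>\<tau><k. matpow L (k-\<tau>) *v u \<tau>"] by linarith
    qed (use g in simp)
    also have "\<dots> = c * \<gamma>^(k+1) * (\<Sum>\<tau><k. norm (u k) * norm (u \<tau>))"
      by (simp add: sum_distrib_left mult_ac)
    also have "\<dots> \<le> c * \<gamma>^(k+1) * (\<Sum>\<tau><k. t / d^k)"
      using c g F3 by (intro mult_left_mono sum_mono) auto
    also have "\<dots> = c * \<gamma> * (real k * (\<gamma>^k / d^k)) * t" by (simp add: mult_ac)
    also have "\<dots> \<le> c * 1 * (real k * (\<gamma>^k / d^k)) * t"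
      using c g t0 d0 by (intro mult_right_mono mult_left_mono) auto
    also have "\<dots> = c * t * (real k * \<eta>^k)" by (simp add: \<eta>_def power_divide)
    finally show ?thesis .
  qed
  have sg: "summable (\<lambda>k. \<gamma>^(k+1))" using g by (simp add: summable_geometric)
  have se: "summable (\<lambda>k. \<eta>^k)" using e by (simp add: summable_geometric)
  have sn: "summable (\<lambda>j. real (Suc j) * \<eta>^j)" using e by (intro summable_Suc_pow) auto
  have sb1: "summable (\<lambda>k. c*norm x*(\<gamma>^(k+1) + \<eta>^k * t))"
    by (intro summable_mult summable_add sg summable_mult2 se)
  have sb2: "summable (\<lambda>k. c * (\<eta>^k * t))" by (intro summable_mult summable_mult2 se)
  have sb3: "summable (\<lambda>j. c * t * (real (Suc j) * \<eta>^j) * \<eta>)" by (intro summable_mult summable_mult2 sn)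
  have B3': "norm (f3 (j+1)) \<le> c * t * (real (Suc j) * \<eta>^j) * \<eta>" for j
    using B3[of "j+1"] by (simp add: mult_ac)
  have S1: "summable f1" by (rule summable_comparison_test[OF _ sb1]) (use B1 in auto)
  have S2: "summable f2" by (rule summable_comparison_test[OF _ sb2]) (use B2 in auto)
  have S3: "summable (\<lambda>j. f3 (j+1))" by (rule summable_comparison_test[OF _ sb3]) (use B3' in auto)
  have N1: "norm (suminf f1) \<le> (\<Sum>k. c*norm x*(\<gamma>^(k+1) + \<eta>^k * t))"
    by (rule norm_suminf_le[OF B1 sb1])
  have N2: "norm (suminf f2) \<le> (\<Sum>k. c * (\<eta>^k * t))"
    by (rule norm_suminf_le[OF B2 sb2])
  have N3: "norm (\<Sum>j. f3 (j+1)) \<le> (\<Sum>j. c * t * (real (Suc j) * \<eta>^j) * \<eta>)"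
    by (rule norm_suminf_le[OF B3' sb3])
  have E1: "(\<Sum>k. c*norm x*(\<gamma>^(k+1) + \<eta>^k * t)) = c*norm x*(\<Sum>k. \<gamma>^(k+1)) + t * (c*norm x*(\<Sum>k. \<eta>^k))"
  proof -
    have s2: "summable (\<lambda>k. \<eta>^k * t)" by (intro summable_mult2 se)
    have "(\<Sum>k. c*norm x*(\<gamma>^(k+1) + \<eta>^k * t)) = c*norm x*(\<Sum>k. \<gamma>^(k+1) + \<eta>^k * t)"
      by (rule suminf_mult) (intro summable_add sg s2)
    also have "(\<Sum>k. \<gamma>^(k+1) + \<eta>^k * t) = (\<Sum>k. \<gamma>^(k+1)) + (\<Sum>k. \<eta>^k * t)"
      by (rule suminf_add[symmetric, OF sg s2])
    also have "(\<Sum>k. \<eta>^k * t) = (\<Sum>k. \<eta>^k) * t" by (rule suminf_mult2[symmetric, OF se])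
    finally show ?thesis by (simp add: algebra_simps)
  qed
  have E2: "(\<Sum>k. c * (\<eta>^k * t)) = t * (c * (\<Sum>k. \<eta>^k))"
  proof -
    have s2: "summable (\<lambda>k. \<eta>^k * t)" by (intro summable_mult2 se)
    have "(\<Sum>k. c * (\<eta>^k * t)) = c * (\<Sum>k. \<eta>^k * t)" by (rule suminf_mult[OF s2])
    also have "(\<Sum>k. \<eta>^k * t) = (\<Sum>k. \<eta>^k) * t" by (rule suminf_mult2[symmetric, OF se])
    finally show ?thesis by (simp add: algebra_simps)
  qed
  have E3: "(\<Sum>j. c * t * (real (Suc j) * \<eta>^j) * \<eta>) \<le> t * (c*(\<Sum>j. real (Suc j) * \<eta>^j))"
  proof -
    have "(\<Sum>j. c * t * (real (Suc j) * \<eta>^j) * \<eta>) = c * t * (\<Sum>j. real (Suc j) * \<eta>^j) * \<eta>"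
    proof -
      have "(\<Sum>j. c * t * (real (Suc j) * \<eta>^j) * \<eta>) = (\<Sum>j. c * t * (real (Suc j) * \<eta>^j)) * \<eta>"
        by (rule suminf_mult2[symmetric]) (intro summable_mult sn)
      also have "(\<Sum>j. c * t * (real (Suc j) * \<eta>^j)) = c * t * (\<Sum>j. real (Suc j) * \<eta>^j)"
        by (rule suminf_mult[OF sn])
      finally show ?thesis .
    qed
    also have "\<dots> \<le> c * t * (\<Sum>j. real (Suc j) * \<eta>^j) * 1"
    proof (intro mult_left_mono)
      have "0 \<le> (\<Sum>j. real (Suc j) * \<eta>^j)" using e by (intro suminf_nonneg[OF sn]) auto
      then show "0 \<le> c * t * (\<Sum>j. real (Suc j) * \<eta>^j)" using c t0 by simp
    qed (use e in auto)
    finally show ?thesis by (simp add: mult_ac)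
  qed
  have G: "GK P L \<gamma> u x = x \<bullet> (P *v x) + 2 * suminf f1 + suminf f2 + 2 * (\<Sum>j. f3 (j+1))"
    unfolding GK_def f1_def f2_def f3_def by simp
  have "\<bar>GK P L \<gamma> u x\<bar> \<le> \<bar>x \<bullet> (P *v x)\<bar> + 2 * norm (suminf f1) + norm (suminf f2) + 2 * norm (\<Sum>j. f3 (j+1))"
    unfolding G by (simp add: abs_mult)
  also have "\<dots> \<le> (\<bar>x \<bullet> (P *v x)\<bar> + 2*(c*norm x*(\<Sum>k. \<gamma>^(k+1))))
        + t * (2*(c*norm x*(\<Sum>k. \<eta>^k)) + c*(\<Sum>k. \<eta>^k) + 2*(c*(\<Sum>j. real (Suc j) * \<eta>^j)))"
    using N1 N2 N3 E1 E2 E3 by (simp add: algebra_simps)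
  finally show ?thesis using S1 S2 S3 unfolding f1_def f2_def f3_def by simp
qed



theorem theorem2:
  fixes M :: "'s measure" and D :: "(real^'n) measure"
    and w :: "nat \<Rightarrow> 's \<Rightarrow> real^'n"
    and A :: "real^'n^'n" and B :: "real^'m^'n" and K :: "real^'n^'m"
    and Q :: "real^'n^'n" and R :: "real^'m^'m" and P :: "real^'n^'n"
    and \<gamma> \<sigma>4 \<rho>K :: real
  assumes "prob_space M"
    and meas: "\<And>k. w k \<in> borel_measurable M"
    and indep: "prob_space.indep_vars M (\<lambda>_. borel) w UNIV"
    and distr: "\<And>k. distr M borel (w k) = D"
    and mean0: "\<And>k. integrable M (w k) \<and> prob_space.expectation M (w k) = 0"
    and mom4: "\<And>k. integrable M (\<lambda>\<omega>. norm (w k \<omega>) ^ 4)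
                  \<and> prob_space.expectation M (\<lambda>\<omega>. norm (w k \<omega>) ^ 4) \<le> \<sigma>4 ^ 4"
    and Qpd: "pos_def_mat Q" and Rpd: "pos_def_mat R"
    and gam: "0 < \<gamma>" "\<gamma> < 1"
    and Lyap: "P = Q + transpose K ** R ** K + \<gamma> *\<^sub>R (transpose (A + B ** K) ** P ** (A + B ** K))"
    and rho: "spec_norm (A + B ** K) = \<rho>K" "\<rho>K < 1"
  shows "\<forall>x :: real^'n.
           (AE \<omega> in M.
              summable (\<lambda>k. \<gamma>^(k+1) * (w k \<omega> \<bullet> (P *v (matpow (A + B ** K) (k+1) *v x))))
            \<and> summable (\<lambda>k. \<gamma>^(k+1) * (w k \<omega> \<bullet> (P *v w k \<omega>)))
            \<and> summable (\<lambda>j. (\<lambda>k. \<gamma>^(k+1) * (w k \<omega> \<bullet> (P *v (\<Sum>\<tau><k. matpow (A + B ** K) (k-\<tau>) *v w \<tau> \<omega>)))) (j+1)))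
         \<and> integrable M (\<lambda>\<omega>. (GK P (A + B ** K) \<gamma> (\<lambda>k. w k \<omega>) x)\<^sup>2)"
proof -
  interpret prob_space M by fact
  define c where "c = spec_norm P"
  define d where "d = (1+\<gamma>)/2"
  have Pb: "\<And>a b. \<bar>a \<bullet> (P *v b)\<bar> \<le> c * norm a * norm b" unfolding c_def by (rule P_bound)
  have c0: "0 \<le> c" unfolding c_def by (rule spec_norm_nonneg)
  have Lb: "\<And>j v. norm (matpow (A + B ** K) j *v v) \<le> norm v"
    by (rule matpow_bound) (use rho in simp)
  have d0: "0 < d" "d < 1" using gam by (auto simp: d_def)
  define f where "f k \<omega> = (d^k)^2 * norm (w k \<omega>)^4" for k \<omega>
  have fm[measurable]: "f k \<in> borel_measurable M" for k
    unfolding f_def[abs_def] using meas by measurable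
  have fi: "integrable M (f k)" for k
    unfolding f_def[abs_def] using mom4[of k] by (intro integrable_mult_right) auto
  have f0: "0 \<le> f k \<omega>" for k \<omega> unfolding f_def by simp
  have fE: "integral\<^sup>L M (f k) \<le> (d^2)^k * \<sigma>4^4" for k
  proof -
    have "integral\<^sup>L M (f k) = (d^k)^2 * expectation (\<lambda>\<omega>. norm (w k \<omega>)^4)"
      unfolding f_def[abs_def] by simp
    also have "\<dots> \<le> (d^k)^2 * \<sigma>4^4" using mom4[of k] by (intro mult_left_mono) auto
    finally show ?thesis by (simp add: power_mult[symmetric] mult.commute)
  qed
  have sI: "summable (\<lambda>k. integral\<^sup>L M (f k))"
  proof (rule summable_comparison_test)
    show "summable (\<lambda>k. (d^2)^k * \<sigma>4^4)"
      using d0 by (intro summable_mult2 summable_geometric) (simp add: abs_less_iff power_less_one_iff)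
    show "\<exists>N. \<forall>n\<ge>N. norm (integral\<^sup>L M (f n)) \<le> (d^2)^n * \<sigma>4^4"
      using fE f0 by (auto intro!: exI[of _ 0] integral_nonneg)
  qed
  have nn: "(\<integral>\<^sup>+\<omega>. (\<Sum>k. ennreal (f k \<omega>)) \<partial>M) = (\<Sum>k. \<integral>\<^sup>+\<omega>. ennreal (f k \<omega>) \<partial>M)"
    by (rule nn_integral_suminf) measurable
  also have "\<dots> = (\<Sum>k. ennreal (integral\<^sup>L M (f k)))"
    by (intro suminf_cong nn_integral_eq_integral fi) (simp add: f0)
  also have "\<dots> = ennreal (\<Sum>k. integral\<^sup>L M (f k))"
    by (rule suminf_ennreal2[OF _ sI]) (simp add: f0 integral_nonneg)
  finally have "(\<integral>\<^sup>+\<omega>. (\<Sum>k. ennreal (f k \<omega>)) \<partial>M) \<noteq> \<infinity>" by simp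
  then have "AE \<omega> in M. (\<Sum>k. ennreal (f k \<omega>)) \<noteq> \<infinity>"
    by (intro nn_integral_PInf_AE) measurable
  then have AEs: "AE \<omega> in M. summable (\<lambda>k. f k \<omega>)"
    by eventually_elim (rule summable_suminf_not_top[OF f0], simp)
  define V where "V \<omega> = (\<Sum>k. f k \<omega>)" for \<omega>
  have Vi: "integrable M V"
    unfolding V_def[abs_def]
  proof (rule integrable_suminf[OF fi])
    show "AE x in M. summable (\<lambda>i. norm (f i x))" using AEs by (simp add: f0)
    show "summable (\<lambda>i. \<integral>x. norm (f i x) \<partial>M)" using sI by (simp add: f0)
  qed
  show ?thesis
  proof
    fix x :: "real^'n"
    define C0 where "C0 = \<bar>x \<bullet> (P *v x)\<bar> + 2*(c*norm x*(\<Sum>k. \<gamma>^(k+1)))"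
    define C1 where "C1 = 2*(c*norm x*(\<Sum>k. (\<gamma>/d)^k)) + c*(\<Sum>k. (\<gamma>/d)^k) + 2*(c*(\<Sum>j. real (Suc j) * (\<gamma>/d)^j))"
    have DB: "summable (\<lambda>k. \<gamma>^(k+1) * (w k \<omega> \<bullet> (P *v (matpow (A + B ** K) (k+1) *v x))))
            \<and> summable (\<lambda>k. \<gamma>^(k+1) * (w k \<omega> \<bullet> (P *v w k \<omega>)))
            \<and> summable (\<lambda>j. \<gamma>^(j+1+1) * (w (j+1) \<omega> \<bullet> (P *v (\<Sum>\<tau><j+1. matpow (A + B ** K) (j+1-\<tau>) *v w \<tau> \<omega>))))
            \<and> \<bar>GK P (A + B ** K) \<gamma> (\<lambda>k. w k \<omega>) x\<bar> \<le> C0 + sqrt (V \<omega>) * C1"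
      if "summable (\<lambda>k. f k \<omega>)" for \<omega>
      using det_bound[OF Pb Lb c0 gam d_def, of "\<lambda>k. w k \<omega>" x] that
      unfolding C0_def C1_def V_def f_def by simp
    have "AE \<omega> in M.
              summable (\<lambda>k. \<gamma>^(k+1) * (w k \<omega> \<bullet> (P *v (matpow (A + B ** K) (k+1) *v x))))
            \<and> summable (\<lambda>k. \<gamma>^(k+1) * (w k \<omega> \<bullet> (P *v w k \<omega>)))
            \<and> summable (\<lambda>j. (\<lambda>k. \<gamma>^(k+1) * (w k \<omega> \<bullet> (P *v (\<Sum>\<tau><k. matpow (A + B ** K) (k-\<tau>) *v w \<tau> \<omega>)))) (j+1))"
      using AEs by eventually_elim (use DB in simp)
    moreover have "integrable M (\<lambda>\<omega>. (GK P (A + B ** K) \<gamma> (\<lambda>k. w k \<omega>) x)\<^sup>2)"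
    proof (rule Bochner_Integration.integrable_bound[where f="\<lambda>\<omega>. 2*C0^2 + 2*C1^2 * V \<omega>"])
      show "integrable M (\<lambda>\<omega>. 2*C0^2 + 2*C1^2 * V \<omega>)"
        by (rule Bochner_Integration.integrable_add[OF integrable_const integrable_mult_right[OF Vi]])
      show "(\<lambda>\<omega>. (GK P (A + B ** K) \<gamma> (\<lambda>k. w k \<omega>) x)\<^sup>2) \<in> borel_measurable M"
        by (rule gk_meas[OF meas])
      show "AE \<omega> in M. norm ((GK P (A + B ** K) \<gamma> (\<lambda>k. w k \<omega>) x)\<^sup>2) \<le> norm (2*C0^2 + 2*C1^2 * V \<omega>)"
        using AEs
      proof eventually_elim
        case (elim \<omega>)
        let ?G = "GK P (A + B ** K) \<gamma> (\<lambda>k. w k \<omega>) x"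
        have V0: "0 \<le> V \<omega>" unfolding V_def by (rule suminf_nonneg[OF elim f0])
        have b: "\<bar>?G\<bar> \<le> C0 + sqrt (V \<omega>) * C1" using DB[OF elim] by blast
        have "?G^2 = \<bar>?G\<bar>^2" by simp
        also have "\<dots> \<le> (C0 + sqrt (V \<omega>) * C1)^2" by (rule power_mono[OF b]) simp
        also have "\<dots> \<le> 2*C0^2 + 2*C1^2 * V \<omega>"
        proof -
          have "0 \<le> (C0 - sqrt (V \<omega>) * C1)^2" by simp
          moreover have "sqrt (V \<omega>)^2 = V \<omega>" using V0 by simp
          ultimately show ?thesis by (simp add: power2_eq_square algebra_simps)
        qed
        finally show ?case using V0 by simp
      qed
    qed
    ultimately show "(AE \<omega> in M.
              summable (\<lambda>k. \<gamma>^(k+1) * (w k \<omega> \<bullet> (P *v (matpow (A + B ** K) (k+1) *v x))))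
            \<and> summable (\<lambda>k. \<gamma>^(k+1) * (w k \<omega> \<bullet> (P *v w k \<omega>)))
            \<and> summable (\<lambda>j. (\<lambda>k. \<gamma>^(k+1) * (w k \<omega> \<bullet> (P *v (\<Sum>\<tau><k. matpow (A + B ** K) (k-\<tau>) *v w \<tau> \<omega>)))) (j+1)))
         \<and> integrable M (\<lambda>\<omega>. (GK P (A + B ** K) \<gamma> (\<lambda>k. w k \<omega>) x)\<^sup>2)" by blast
  qed
qed

end
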